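(* Let $x\in\mathbb{R}^d$ with success probabilities $\rho_i(x)>\tfrac12$ for all $i$, let $M\ge1$, $l=\lfloor\frac{M+1}2\rfloor$, and $\rho(x):=\min_{1\le i\le d}\rho_i(x)$. Then $$\big(1-e^{-(2\rho(x)-1)^2l}\big)\|g(x)\|_1\le\|g(x)\|_{\rho_M}\le\|g(x)\|_1.$$
   Context: $g(x)\in\mathbb{R}^d$ is the gradient at $x$ and $\rho_i(x)\in(\tfrac12,1]$ are given numbers (success probabilities). $I(p;a,b)=\frac{\int_0^pt^{a-1}(1-t)^{b-1}dt}{\int_0^1t^{a-1}(1-t)^{b-1}dt}$ is the regularized incomplete beta function, and $\|g(x)\|_{\rho_M}:=\sum_{i=1}^d\big(2I(\rho_i(x);l,l)-1\big)|g_i(x)|$. *)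

theory Defs
  imports "HOL-Analysis.Analysis"
begin

definition reg_inc_beta :: "real \<Rightarrow> real \<Rightarrow> real \<Rightarrow> real" where
  "reg_inc_beta p a b =
     integral {0..p} (\<lambda>t. t powr (a - 1) * (1 - t) powr (b - 1)) /
     integral {0..1} (\<lambda>t. t powr (a - 1) * (1 - t) powr (b - 1))"

definition norm1 :: "real^'n \<Rightarrow> real" where
  "norm1 v = (\<Sum>i\<in>UNIV. \<bar>v $ i\<bar>)"

definition rho_norm :: "real^'n \<Rightarrow> nat \<Rightarrow> real^'n \<Rightarrow> real" where
  "rho_norm rho l v = (\<Sum>i\<in>UNIV. (2 * reg_inc_beta (rho $ i) (real l) (real l) - 1) * \<bar>v $ i\<bar>)"

end

theory Submission
  imports Defs
begin


definition bf :: "nat \<Rightarrow> real \<Rightarrow> real" where "bf l t = (t*(1-t))^(l-1)"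
definition bJ :: "nat \<Rightarrow> real \<Rightarrow> real" where "bJ l p = integral {-1..p} (bf l)"

lemma bf_cont: "continuous_on S (bf l)"
  unfolding bf_def by (intro continuous_intros)

lemma bf_int: "bf l integrable_on {a..b}"
  by (rule integrable_continuous_real[OF bf_cont])

lemma bf_nonneg: "0 \<le> t \<Longrightarrow> t \<le> 1 \<Longrightarrow> 0 \<le> bf l t"
  unfolding bf_def by simp

lemma bJ_deriv: assumes "-1 < x" "x < 3" shows "DERIV (bJ l) x :> bf l x"
proof -
  have "((\<lambda>p. integral {-1..p} (bf l)) has_real_derivative bf l x) (at x within {-1..3})"
    by (rule integral_has_real_derivative[OF bf_cont]) (use assms in auto)
  moreover have "x \<in> interior {-1..3::real}" using assms by auto
  hence "at x within {-1..3::real} = at x" by (rule at_within_interior)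
  ultimately show ?thesis unfolding bJ_def by (simp only:)
qed

lemma bJ_diff: assumes "-1 \<le> a" "a \<le> b" shows "bJ l b - bJ l a = integral {a..b} (bf l)"
  using Henstock_Kurzweil_Integration.integral_combine[OF assms(1) assms(2) bf_int[of l "-1" b]] unfolding bJ_def by simp

lemma bJ_sym: "2 * bJ l (1/2) = bJ l 0 + bJ l 1"
proof -
  let ?K = "\<lambda>p. bJ l p + bJ l (1-p)"
  have d: "DERIV ?K x :> 0" if "0 < x" "x < 1" for x
  proof -
    have "DERIV ?K x :> bf l x + bf l (1-x) * (-1)"
      using that by (intro DERIV_add DERIV_chain2[where f="bJ l"] bJ_deriv derivative_eq_intros) auto
    moreover have "bf l (1-x) = bf l x" unfolding bf_def by (simp add: mult.commute)
    ultimately show ?thesis by simp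
  qed
  have c: "continuous_on {0..1} ?K"
  proof -
    have "\<forall>x\<in>{0..1}. isCont ?K x"
    proof
      fix x :: real assume "x \<in> {0..1}"
      hence "DERIV ?K x :> bf l x + bf l (1-x) * (-1)"
        by (intro DERIV_add DERIV_chain2[where f="bJ l"] bJ_deriv derivative_eq_intros) auto
      thus "isCont ?K x" by (rule DERIV_isCont)
    qed
    thus ?thesis by (rule continuous_at_imp_continuous_on)
  qed
  have "?K (1/2) = ?K 0" by (rule DERIV_isconst2[OF _ c d]) auto
  thus ?thesis by simp
qed

lemma bB_pos: assumes "l \<ge> 1" shows "0 < bJ l 1 - bJ l 0"
proof -
  have "bJ l 1 - bJ l 0 = (bJ l (1/4) - bJ l 0) + (bJ l (3/4) - bJ l (1/4)) + (bJ l 1 - bJ l (3/4))"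
    by simp
  also have "... \<ge> 0 + (1/2) * (3/16)^(l-1) + 0"
  proof (intro add_mono)
    show "0 \<le> bJ l (1/4) - bJ l 0" "0 \<le> bJ l 1 - bJ l (3/4)"
      by (simp_all only: bJ_diff) (auto intro!: integral_nonneg bf_int bf_nonneg)
    have "integral {1/4..3/4::real} (\<lambda>_. (3/16::real)^(l-1)) \<le> integral {1/4..3/4} (bf l)"
    proof (rule integral_le[OF _ bf_int])
      fix x :: real assume "x \<in> {1/4..3/4}"
      hence "0 \<le> (x-1/4)*(3/4-x)" by (intro mult_nonneg_nonneg) auto
      moreover have "x*(1-x) - 3/16 = (x-1/4)*(3/4-x)" by (simp add: field_simps)
      ultimately have "3/16 \<le> x*(1-x)" by linarith
      thus "(3/16)^(l-1) \<le> bf l x" unfolding bf_def by (intro power_mono) auto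
    qed auto
    thus "(1/2) * (3/16)^(l-1) \<le> bJ l (3/4) - bJ l (1/4)"
      by (simp add: bJ_diff)
  qed
  finally have "1/2 * (3/16::real)^(l-1) \<le> bJ l 1 - bJ l 0" by simp
  moreover have "0 < (3/16::real)^(l-1)" by simp
  ultimately show ?thesis by linarith
qed

lemma tail_int: assumes "l \<ge> 1" "0 \<le> p" "p \<le> 1"
  shows "((\<lambda>t. (2*t-1) * bf l t) has_integral ((p*(1-p))^l / real l)) {p..1}"
proof -
  let ?F = "\<lambda>t. -((t*(1-t))^l) / real l"
  have hi: "((\<lambda>t. (2*t-1) * bf l t) has_integral (?F 1 - ?F p)) {p..1}"
  proof (rule fundamental_theorem_of_calculus)
    show "p \<le> 1" by fact
    fix x :: real assume "x \<in> {p..1}"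
    have d1: "DERIV (\<lambda>t. t*(1-t)) x :> 1 - 2*x"
      by (rule derivative_eq_intros refl | simp)+
    have "DERIV ?F x :> - (real l * ((1 - 2*x) * (x*(1-x))^(l - Suc 0))) / real l"
      by (intro DERIV_cdivide DERIV_minus DERIV_power d1)
    moreover have "- (real l * ((1 - 2*x) * (x*(1-x))^(l - Suc 0))) / real l = (2*x-1) * bf l x"
      using assms(1) by (simp add: bf_def field_simps)
    ultimately have "DERIV ?F x :> (2*x-1) * bf l x" by simp
    thus "(?F has_vector_derivative (2*x-1) * bf l x) (at x within {p..1})"
      by (simp add: has_real_derivative_iff_has_vector_derivative[symmetric] has_field_derivative_at_within)
  qed
  have eq: "?F 1 - ?F p = (p*(1-p))^l / real l"
  proof -
    have "(0::real)^l = 0" using assms(1) by simp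
    thus ?thesis by simp
  qed
  show ?thesis using hi unfolding eq .
qed

lemma key_ineq: assumes "l \<ge> 1" "1/2 \<le> p" "p \<le> 1"
  shows "4 * real l * (2*p-1) * (bJ l 1 - bJ l p) \<le> bf l p"
proof -
  have ti: "((\<lambda>t. (2*t-1) * bf l t) has_integral ((p*(1-p))^l / real l)) {p..1}"
    using tail_int[OF assms(1), of p] assms by auto
  have "(2*p-1) * (bJ l 1 - bJ l p) = integral {p..1} (\<lambda>t. (2*p-1) * bf l t)"
    using assms by (simp add: bJ_diff)
  also have "... \<le> integral {p..1} (\<lambda>t. (2*t-1) * bf l t)"
  proof (rule integral_le)
    show "(\<lambda>t. (2*p-1) * bf l t) integrable_on {p..1}"
      by (rule integrable_continuous_real[OF continuous_on_mult[OF continuous_on_const bf_cont]])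
    show "(\<lambda>t. (2*t-1) * bf l t) integrable_on {p..1}" using ti by (rule has_integral_integrable)
    fix x assume "x \<in> {p..1}"
    hence "0 \<le> bf l x" using assms by (intro bf_nonneg) auto
    with \<open>x \<in> {p..1}\<close> show "(2*p-1) * bf l x \<le> (2*x-1) * bf l x" by (intro mult_right_mono) auto
  qed
  also have "... = (p*(1-p))^l / real l" using ti by (rule integral_unique)
  finally have A: "(2*p-1) * (bJ l 1 - bJ l p) \<le> (p*(1-p))^l / real l" .
  have "4 * real l * (2*p-1) * (bJ l 1 - bJ l p) \<le> 4 * real l * ((p*(1-p))^l / real l)"
  proof -
    have "real l * ((2*p-1) * (bJ l 1 - bJ l p)) \<le> real l * ((p*(1-p))^l / real l)"
      by (rule mult_left_mono[OF A]) simp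
    thus ?thesis using assms(1) by (simp add: mult.assoc split: if_splits)
  qed
  also have "... = 4 * (p*(1-p)) * bf l p" using assms(1)
    by (cases l) (auto simp: bf_def field_simps)
  also have "... \<le> 1 * bf l p"
  proof (rule mult_right_mono)
    have "0 \<le> (2*p-1)^2" by simp
    moreover have "(2*p-1)^2 = 1 - 4*(p*(1-p))" by (simp add: power2_eq_square algebra_simps)
    ultimately show "4 * (p*(1-p)) \<le> 1" by linarith
    show "0 \<le> bf l p" using assms by (intro bf_nonneg) auto
  qed
  finally show ?thesis by simp
qed

lemma tail_bound: assumes "l \<ge> 1" "1/2 \<le> p" "p \<le> 1"
  shows "bJ l 1 - bJ l p \<le> (bJ l 1 - bJ l 0) / 2 * exp (- ((2*p-1)^2 * real l))"
proof -
  let ?H = "\<lambda>p. (bJ l 1 - bJ l p) * exp (real l * (2*p-1)^2)"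
  let ?H' = "\<lambda>x. (0 - bf l x) * exp (real l * (2*x-1)^2) + (exp (real l * (2*x-1)^2) * (real l * (2 * (2*x-1) * 2))) * (bJ l 1 - bJ l x)"
  have d: "DERIV ?H x :> ?H' x" if "-1 < x" "x < 3" for x
  proof -
    have e: "DERIV (\<lambda>p. exp (real l * (2*p-1)^2)) x :> exp (real l * (2*x-1)^2) * (real l * (2 * (2*x-1) * 2))"
      by (auto intro!: derivative_eq_intros)
    show ?thesis by (rule DERIV_mult[OF DERIV_diff[OF DERIV_const bJ_deriv[OF that]] e])
  qed
  have c: "continuous_on {1/2..p} ?H"
  proof (rule continuous_at_imp_continuous_on, rule ballI)
    fix x :: real assume "x \<in> {1/2..p}"
    hence "-1 < x" "x < 3" using assms by auto
    thus "isCont ?H x" by (rule DERIV_isCont[OF d])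
  qed
  have "?H p \<le> ?H (1/2)"
  proof (rule DERIV_nonpos_imp_decreasing_open[OF assms(2) _ c])
    fix x :: real assume x: "1/2 < x" "x < p"
    have "?H' x = exp (real l * (2*x-1)^2) * (4 * real l * (2*x-1) * (bJ l 1 - bJ l x) - bf l x)"
      by (simp add: algebra_simps)
    also have "... \<le> 0"
      using key_ineq[OF assms(1), of x] x assms by (intro mult_nonneg_nonpos) auto
    finally show "\<exists>y. DERIV ?H x :> y \<and> y \<le> 0" using d[of x] x assms by auto
  qed
  moreover have "?H (1/2) = (bJ l 1 - bJ l 0) / 2" using bJ_sym[of l] by simp
  ultimately have "(bJ l 1 - bJ l p) * exp (real l * (2*p-1)^2) \<le> (bJ l 1 - bJ l 0) / 2" by simp
  hence "(bJ l 1 - bJ l p) * exp (real l * (2*p-1)^2) * exp (- ((2*p-1)^2 * real l))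
        \<le> (bJ l 1 - bJ l 0) / 2 * exp (- ((2*p-1)^2 * real l))"
    by (intro mult_right_mono) auto
  moreover have "exp (real l * (2*p-1)^2) * exp (- ((2*p-1)^2 * real l)) = 1"
    by (simp add: exp_minus[symmetric] exp_add[symmetric] mult.commute del: exp_minus)
  ultimately show ?thesis by (simp add: mult.assoc)
qed


lemma rib_eq: assumes "l \<ge> 1" "0 \<le> p" "p \<le> 1"
  shows "reg_inc_beta p (real l) (real l) = (bJ l p - bJ l 0) / (bJ l 1 - bJ l 0)"
proof -
  have sp: "integral {0..q} (\<lambda>t. t powr (real l - 1) * (1 - t) powr (real l - 1)) = integral {0..q} (bf l)"
    if "q \<le> 1" for q
  proof (rule integral_spike[of "{0,1}"])
    show "negligible {0::real,1}" by auto
    fix t assume t: "t \<in> {0..q} - {0,1}"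
    have e: "real l - 1 = real (l-1)" using assms(1) by simp
    have t0: "0 < t" and t1: "0 < 1 - t" using t that by auto
    show "bf l t = t powr (real l - 1) * (1 - t) powr (real l - 1)"
      unfolding e bf_def power_mult_distrib by (simp only: powr_realpow[OF t0] powr_realpow[OF t1])
  qed
  show ?thesis unfolding reg_inc_beta_def
    using sp[of p] sp[of 1] assms bJ_diff[of 0 p l] bJ_diff[of 0 1 l] by simp
qed

lemma aux_lin: "2 * (X::real) \<le> E \<Longrightarrow> 0 \<le> X \<Longrightarrow> 1 - E \<le> 2 * (1 - X) - 1 \<and> 2 * (1 - X) - 1 \<le> 1"
  by auto

lemma coord_bound: assumes "l \<ge> 1" "1/2 < p" "p \<le> 1"
  shows "1 - exp (- ((2*p-1)^2 * real l)) \<le> 2 * reg_inc_beta p (real l) (real l) - 1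
       \<and> 2 * reg_inc_beta p (real l) (real l) - 1 \<le> 1"
proof -
  define B where "B = bJ l 1 - bJ l 0"
  have B: "0 < B" unfolding B_def by (rule bB_pos[OF assms(1)])
  have I: "reg_inc_beta p (real l) (real l) = 1 - (bJ l 1 - bJ l p) / B"
    using rib_eq[OF assms(1), of p] assms B unfolding B_def by (simp add: field_simps)
  have t: "bJ l 1 - bJ l p \<le> B / 2 * exp (- ((2*p-1)^2 * real l))"
    unfolding B_def using tail_bound[OF assms(1), of p] assms by simp
  have nn: "0 \<le> bJ l 1 - bJ l p"
    using assms by (simp add: bJ_diff) (auto intro!: integral_nonneg bf_int bf_nonneg)
  have "2 * ((bJ l 1 - bJ l p) / B) \<le> exp (- ((2*p-1)^2 * real l))"
    using t B by (simp add: field_simps)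
  moreover have "0 \<le> (bJ l 1 - bJ l p) / B" using nn B by simp
  ultimately show ?thesis unfolding I by (rule aux_lin)
qed

theorem mainTheorem5:
  fixes x :: "real^'n"
    and g :: "real^'n \<Rightarrow> real^'n"
    and \<rho> :: "real^'n \<Rightarrow> real^'n"
    and M l :: nat
  assumes rho_range: "\<And>i. 1/2 < \<rho> x $ i \<and> \<rho> x $ i \<le> 1"
    and M: "M \<ge> 1"
    and l_def: "l = (M + 1) div 2"
  shows "(1 - exp (- ((2 * Min (range (\<lambda>i. \<rho> x $ i)) - 1)^2 * real l))) * norm1 (g x)
           \<le> rho_norm (\<rho> x) l (g x)
         \<and> rho_norm (\<rho> x) l (g x) \<le> norm1 (g x)"
proof -
  have l1: "l \<ge> 1" using M l_def by simp
  define m where "m = Min (range (\<lambda>i. \<rho> x $ i))"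
  have "m \<in> range (\<lambda>i. \<rho> x $ i)" unfolding m_def by (intro Min_in) auto
  hence m: "1/2 < m" using rho_range by auto
  have mle: "m \<le> \<rho> x $ i" for i unfolding m_def by (intro Min_le) auto
  define c where "c i = 2 * reg_inc_beta (\<rho> x $ i) (real l) (real l) - 1" for i
  have lo: "1 - exp (- ((2*m-1)^2 * real l)) \<le> c i" for i
  proof -
    have "(2*m-1)^2 \<le> (2 * \<rho> x $ i - 1)^2"
      using m mle[of i] by (intro power_mono) auto
    hence "exp (- ((2 * \<rho> x $ i - 1)^2 * real l)) \<le> exp (- ((2*m-1)^2 * real l))"
      by (intro exp_mono) (use l1 in \<open>auto intro: mult_right_mono\<close>)
    thus ?thesis using coord_bound[OF l1, of "\<rho> x $ i"] rho_range[of i] unfolding c_def by linarith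
  qed
  have up: "c i \<le> 1" for i using coord_bound[OF l1, of "\<rho> x $ i"] rho_range[of i] unfolding c_def by blast
  have rn: "rho_norm (\<rho> x) l (g x) = (\<Sum>i\<in>UNIV. c i * \<bar>g x $ i\<bar>)"
    unfolding rho_norm_def c_def ..
  have "(1 - exp (- ((2*m-1)^2 * real l))) * norm1 (g x) = (\<Sum>i\<in>UNIV. (1 - exp (- ((2*m-1)^2 * real l))) * \<bar>g x $ i\<bar>)"
    unfolding norm1_def by (simp add: sum_distrib_left)
  also have "... \<le> (\<Sum>i\<in>UNIV. c i * \<bar>g x $ i\<bar>)"
    by (intro sum_mono mult_right_mono lo) auto
  finally have A: "(1 - exp (- ((2*m-1)^2 * real l))) * norm1 (g x) \<le> rho_norm (\<rho> x) l (g x)"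
    unfolding rn .
  have "(\<Sum>i\<in>UNIV. c i * \<bar>g x $ i\<bar>) \<le> (\<Sum>i\<in>UNIV. 1 * \<bar>g x $ i\<bar>)"
    by (intro sum_mono mult_right_mono up) auto
  hence "rho_norm (\<rho> x) l (g x) \<le> norm1 (g x)" unfolding rn norm1_def by simp
  with A have "(1 - exp (- ((2*m-1)^2 * real l))) * norm1 (g x) \<le> rho_norm (\<rho> x) l (g x)
         \<and> rho_norm (\<rho> x) l (g x) \<le> norm1 (g x)" by (rule conjI)
  thus ?thesis by (simp only: m_def)
qed

end
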